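(* Let $N\ge1$, $K\ge1$, $n_v\ge0$. For a row-stochastic matrix $\mathbf{T}\in[0,1]^{K\times K}$ let $\mathbf{P}_{\mathbf{T}}\in[0,1]^{K^N\times K^N}$ denote the associated global transition matrix. Then the map $\mathbf{T}\mapsto\mathbf{P}_{\mathbf{T}}$, restricted to irreducible aperiodic row-stochastic matrices $\mathbf{T}$, is one-to-one. Furthermore, for such $\mathbf{T}$, let $\pi$ be the unique invariant measure of $\mathbf{P}_{\mathbf{T}}$, let $\tilde\pi$ be the unique invariant measure of $\mathbf{T}$, and for $n\in[N]$ let $\pi_n$ be the $n$-th marginal of $\pi$, i.e. $\pi_n(k)=\lim_{t\to\infty}\mathbb{P}(X_n(t)=k)$ for $k\in[K]$, where $X(\cdot)$ is the Markov chain with transition matrix $\mathbf{P}_{\mathbf{T}}$. Then $\pi_n=\tilde\pi$ for every $n\in[N]$.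
   Context: Vertices $[N]=\{1,\dots,N\}$ are arranged on a cycle; for $n\in[N]$, $V_n\subset[N]$ is the set of residues modulo $N$ of $n-n_v,\dots,n+n_v$, and $|V_n|$ its cardinality. The global transition matrix is $\mathbf{P}_{\mathbf{T}}(x,y)=\prod_{n=1}^N \frac{1}{|V_n|}\sum_{i\in V_n}\mathbf{T}_{x_i,y_n}$ for $x,y\in[K]^N$ (the transition matrix of the probabilistic cellular automaton with local transition matrix $\mathbf{T}$). *)

theory Defs
  imports "HOL-Library.FuncSet" Complex_Main
begin

definition config_space :: "nat \<Rightarrow> nat \<Rightarrow> (nat \<Rightarrow> nat) set" where
  "config_space N K = PiE {1..N} (\<lambda>_. {1..K})"

text \<open>V_n: residues (represented in {1..N}) of n - nv, ..., n + nv modulo N.\<close>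
definition nbhd :: "nat \<Rightarrow> nat \<Rightarrow> nat \<Rightarrow> nat set" where
  "nbhd N nv n = {nat (((int n + j - 1) mod int N) + 1) | j. - int nv \<le> j \<and> j \<le> int nv}"

definition global_trans ::
  "nat \<Rightarrow> nat \<Rightarrow> (nat \<Rightarrow> nat \<Rightarrow> real) \<Rightarrow> (nat \<Rightarrow> nat) \<Rightarrow> (nat \<Rightarrow> nat) \<Rightarrow> real" where
  "global_trans N nv T x y =
     (\<Prod>n\<in>{1..N}. (1 / real (card (nbhd N nv n))) * (\<Sum>i\<in>nbhd N nv n. T (x i) (y n)))"

definition row_stochastic :: "nat \<Rightarrow> (nat \<Rightarrow> nat \<Rightarrow> real) \<Rightarrow> bool" where
  "row_stochastic K T \<longleftrightarrow>
     (\<forall>i\<in>{1..K}. \<forall>j\<in>{1..K}. 0 \<le> T i j \<and> T i j \<le> 1) \<and>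
     (\<forall>i\<in>{1..K}. (\<Sum>j\<in>{1..K}. T i j) = 1)"

fun mat_pow :: "nat \<Rightarrow> (nat \<Rightarrow> nat \<Rightarrow> real) \<Rightarrow> nat \<Rightarrow> nat \<Rightarrow> nat \<Rightarrow> real" where
  "mat_pow K T 0 = (\<lambda>i j. if i = j then 1 else 0)"
| "mat_pow K T (Suc m) = (\<lambda>i j. \<Sum>k\<in>{1..K}. mat_pow K T m i k * T k j)"

definition irreducible_mat :: "nat \<Rightarrow> (nat \<Rightarrow> nat \<Rightarrow> real) \<Rightarrow> bool" where
  "irreducible_mat K T \<longleftrightarrow> (\<forall>i\<in>{1..K}. \<forall>j\<in>{1..K}. \<exists>m. mat_pow K T m i j > 0)"

definition period_of :: "nat \<Rightarrow> (nat \<Rightarrow> nat \<Rightarrow> real) \<Rightarrow> nat \<Rightarrow> nat" where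
  "period_of K T i = Gcd {m. m > 0 \<and> mat_pow K T m i i > 0}"

definition aperiodic_mat :: "nat \<Rightarrow> (nat \<Rightarrow> nat \<Rightarrow> real) \<Rightarrow> bool" where
  "aperiodic_mat K T \<longleftrightarrow> (\<forall>i\<in>{1..K}. period_of K T i = 1)"

definition invariant_measure :: "'s set \<Rightarrow> ('s \<Rightarrow> 's \<Rightarrow> real) \<Rightarrow> ('s \<Rightarrow> real) \<Rightarrow> bool" where
  "invariant_measure S P \<mu> \<longleftrightarrow>
     (\<forall>x. x \<notin> S \<longrightarrow> \<mu> x = 0) \<and> (\<forall>x\<in>S. 0 \<le> \<mu> x) \<and> (\<Sum>x\<in>S. \<mu> x) = 1 \<and>
     (\<forall>y\<in>S. (\<Sum>x\<in>S. \<mu> x * P x y) = \<mu> y)"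

definition marginal :: "nat \<Rightarrow> nat \<Rightarrow> ((nat \<Rightarrow> nat) \<Rightarrow> real) \<Rightarrow> nat \<Rightarrow> nat \<Rightarrow> real" where
  "marginal N K \<pi> n k = (\<Sum>x\<in>{x\<in>config_space N K. x n = k}. \<pi> x)"

end

theory Submission
  imports Defs
begin


fun mp :: "'s set \<Rightarrow> ('s \<Rightarrow> 's \<Rightarrow> real) \<Rightarrow> nat \<Rightarrow> 's \<Rightarrow> 's \<Rightarrow> real" where
  "mp S P 0 = (\<lambda>i j. if i = j then 1 else 0)"
| "mp S P (Suc m) = (\<lambda>i j. \<Sum>k\<in>S. mp S P m i k * P k j)"

definition stoch :: "'s set \<Rightarrow> ('s \<Rightarrow> 's \<Rightarrow> real) \<Rightarrow> bool" where
  "stoch S P \<longleftrightarrow> (\<forall>x\<in>S. \<forall>y\<in>S. 0 \<le> P x y) \<and> (\<forall>x\<in>S. (\<Sum>y\<in>S. P x y) = 1)"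

lemma mp_add:
  assumes "finite S" "y \<in> S"
  shows "mp S P (a + b) x y = (\<Sum>z\<in>S. mp S P a x z * mp S P b z y)"
  using assms(2)
proof (induction b arbitrary: y)
  case 0
  have "(\<Sum>z\<in>S. mp S P a x z * mp S P 0 z y) = (\<Sum>z\<in>S. if z = y then mp S P a x z else 0)"
    by (intro sum.cong) auto
  also have "\<dots> = mp S P a x y" using 0 assms(1) by (simp add: sum.delta')
  finally show ?case by simp
next
  case (Suc b)
  have "mp S P (a + Suc b) x y = (\<Sum>w\<in>S. mp S P (a+b) x w * P w y)" by simp
  also have "\<dots> = (\<Sum>w\<in>S. (\<Sum>z\<in>S. mp S P a x z * mp S P b z w) * P w y)"
    using Suc.IH by (intro sum.cong) auto
  also have "\<dots> = (\<Sum>z\<in>S. mp S P a x z * (\<Sum>w\<in>S. mp S P b z w * P w y))"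
    by (simp add: sum_distrib_left sum_distrib_right mult.assoc) (rule sum.swap)
  finally show ?case by simp
qed

lemma mp_nonneg:
  assumes "stoch S P" "x \<in> S" "y \<in> S"
  shows "0 \<le> mp S P k x y"
  using assms(3)
proof (induction k arbitrary: y)
  case (Suc k)
  then show ?case using assms unfolding stoch_def by (auto intro!: sum_nonneg mult_nonneg_nonneg)
qed auto

lemma mp_stoch:
  assumes "finite S" "stoch S P"
  shows "stoch S (mp S P k)"
proof (induction k)
  case 0
  then show ?case using assms by (auto simp: stoch_def sum.delta)
next
  case (Suc k)
  have "(\<Sum>y\<in>S. mp S P (Suc k) x y) = 1" if "x \<in> S" for x
  proof -
    have "(\<Sum>y\<in>S. mp S P (Suc k) x y) = (\<Sum>z\<in>S. mp S P k x z * (\<Sum>y\<in>S. P z y))"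
      by (simp add: sum_distrib_left) (rule sum.swap)
    also have "\<dots> = (\<Sum>z\<in>S. mp S P k x z)" using assms(2) by (simp add: stoch_def)
    also have "\<dots> = 1" using Suc that by (simp add: stoch_def)
    finally show ?thesis .
  qed
  moreover have "0 \<le> mp S P (Suc k) x y" if "x \<in> S" "y \<in> S" for x y
    using mp_nonneg[OF assms(2) that] .
  ultimately show ?case unfolding stoch_def by blast
qed

lemma dobrushin:
  assumes "finite S" "stoch S Q" "\<And>x y. x \<in> S \<Longrightarrow> y \<in> S \<Longrightarrow> \<delta> \<le> Q x y"
    and "(\<Sum>x\<in>S. d x) = 0"
  shows "(\<Sum>y\<in>S. \<bar>\<Sum>x\<in>S. d x * Q x y\<bar>) \<le> (1 - real (card S) * \<delta>) * (\<Sum>x\<in>S. \<bar>d x\<bar>)"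
proof -
  have "(\<Sum>y\<in>S. \<bar>\<Sum>x\<in>S. d x * Q x y\<bar>) = (\<Sum>y\<in>S. \<bar>\<Sum>x\<in>S. d x * (Q x y - \<delta>)\<bar>)"
  proof (intro sum.cong refl)
    fix y
    have "(\<Sum>x\<in>S. d x * (Q x y - \<delta>)) = (\<Sum>x\<in>S. d x * Q x y) - \<delta> * (\<Sum>x\<in>S. d x)"
      by (simp add: right_diff_distrib sum_subtractf sum_distrib_left mult.commute)
    then show "\<bar>\<Sum>x\<in>S. d x * Q x y\<bar> = \<bar>\<Sum>x\<in>S. d x * (Q x y - \<delta>)\<bar>" using assms(4) by simp
  qed
  also have "\<dots> \<le> (\<Sum>y\<in>S. \<Sum>x\<in>S. \<bar>d x\<bar> * (Q x y - \<delta>))"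
  proof (rule sum_mono)
    fix y assume y: "y \<in> S"
    have "\<bar>\<Sum>x\<in>S. d x * (Q x y - \<delta>)\<bar> \<le> (\<Sum>x\<in>S. \<bar>d x * (Q x y - \<delta>)\<bar>)" by (rule sum_abs)
    also have "\<dots> = (\<Sum>x\<in>S. \<bar>d x\<bar> * (Q x y - \<delta>))"
      using assms(3) y by (intro sum.cong) (auto simp: abs_mult)
    finally show "\<bar>\<Sum>x\<in>S. d x * (Q x y - \<delta>)\<bar> \<le> (\<Sum>x\<in>S. \<bar>d x\<bar> * (Q x y - \<delta>))" .
  qed
  also have "\<dots> = (\<Sum>x\<in>S. \<bar>d x\<bar> * (\<Sum>y\<in>S. Q x y) - \<bar>d x\<bar> * real (card S) * \<delta>)"
    by (subst sum.swap) (simp add: sum_distrib_left right_diff_distrib sum_subtractf mult_ac)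
  also have "\<dots> = (1 - real (card S) * \<delta>) * (\<Sum>x\<in>S. \<bar>d x\<bar>)"
    using assms(2) by (simp add: stoch_def sum_distrib_left sum_distrib_right algebra_simps sum_subtractf)
  finally show ?thesis .
qed

lemma invD:
  assumes "invariant_measure S P \<mu>"
  shows "x \<notin> S \<Longrightarrow> \<mu> x = 0" "x \<in> S \<Longrightarrow> 0 \<le> \<mu> x" "(\<Sum>x\<in>S. \<mu> x) = 1"
    "y \<in> S \<Longrightarrow> (\<Sum>x\<in>S. \<mu> x * P x y) = \<mu> y"
  using assms unfolding invariant_measure_def by blast+

lemma invI:
  assumes "\<And>x. x \<notin> S \<Longrightarrow> \<mu> x = 0" "\<And>x. x \<in> S \<Longrightarrow> 0 \<le> \<mu> x" "(\<Sum>x\<in>S. \<mu> x) = 1"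
    "\<And>y. y \<in> S \<Longrightarrow> (\<Sum>x\<in>S. \<mu> x * P x y) = \<mu> y"
  shows "invariant_measure S P \<mu>"
proof -
  have a: "\<forall>x. x \<notin> S \<longrightarrow> \<mu> x = 0" using assms(1) by blast
  have b: "\<forall>x\<in>S. 0 \<le> \<mu> x" using assms(2) by blast
  have d: "\<forall>y\<in>S. (\<Sum>x\<in>S. \<mu> x * P x y) = \<mu> y" using assms(4) by blast
  show ?thesis unfolding invariant_measure_def by (rule conjI[OF a conjI[OF b conjI[OF assms(3) d]]])
qed

lemma inv_mp:
  assumes "finite S" "invariant_measure S P \<mu>"
  shows "invariant_measure S (mp S P k) \<mu>"
proof -
  have "\<forall>y\<in>S. (\<Sum>x\<in>S. \<mu> x * mp S P k x y) = \<mu> y"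
  proof (induction k)
    case 0
    show ?case using assms(1) by (auto simp: if_distrib cong: if_cong)
  next
    case (Suc k)
    show ?case
    proof
      fix y assume y: "y \<in> S"
      have "(\<Sum>x\<in>S. \<mu> x * mp S P (Suc k) x y) = (\<Sum>z\<in>S. (\<Sum>x\<in>S. \<mu> x * mp S P k x z) * P z y)"
        by (simp add: sum_distrib_left sum_distrib_right mult.assoc) (rule sum.swap)
      also have "\<dots> = (\<Sum>z\<in>S. \<mu> z * P z y)" using Suc by simp
      also have "\<dots> = \<mu> y" using invD(4)[OF assms(2) y] .
      finally show "(\<Sum>x\<in>S. \<mu> x * mp S P (Suc k) x y) = \<mu> y" .
    qed
  qed
  then show ?thesis using invI[OF invD(1-3)[OF assms(2)]] by blast
qed

lemma unique_pos:
  assumes "finite S" "stoch S Q" "\<And>x y. x \<in> S \<Longrightarrow> y \<in> S \<Longrightarrow> \<delta> \<le> Q x y" "\<delta> > 0"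
    and "invariant_measure S Q \<mu>" "invariant_measure S Q \<nu>"
  shows "\<mu> = \<nu>"
proof -
  define d where "d x = \<mu> x - \<nu> x" for x
  have sd: "(\<Sum>x\<in>S. d x) = 0" using invD(3)[OF assms(5)] invD(3)[OF assms(6)] by (simp add: d_def sum_subtractf)
  have S: "S \<noteq> {}" using invD(3)[OF assms(5)] by auto
  hence cS: "real (card S) \<ge> 1" using assms(1) by (simp add: Suc_leI card_gt_0_iff)
  have st: "(\<Sum>x\<in>S. d x * Q x y) = d y" if "y \<in> S" for y
    using invD(4)[OF assms(5) that] invD(4)[OF assms(6) that] by (simp add: d_def left_diff_distrib sum_subtractf)
  define A where "A = (\<Sum>x\<in>S. \<bar>d x\<bar>)"
  have "A = (\<Sum>y\<in>S. \<bar>\<Sum>x\<in>S. d x * Q x y\<bar>)" unfolding A_def using st by (intro sum.cong refl) simp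
  also have "\<dots> \<le> (1 - real (card S) * \<delta>) * A" unfolding A_def
    by (rule dobrushin[OF assms(1,2,3) sd])
  finally have "A \<le> (1 - real (card S) * \<delta>) * A" .
  moreover have "A \<ge> 0" unfolding A_def by (simp add: sum_nonneg)
  moreover have "real (card S) * \<delta> > 0" using cS assms(4) by simp
  ultimately have "real (card S) * \<delta> * A \<le> real (card S) * \<delta> * 0"
    by (simp add: algebra_simps)
  hence "A \<le> 0" using \<open>real (card S) * \<delta> > 0\<close> by (simp only: mult_le_cancel_left_pos)
  hence "A = 0" using \<open>A \<ge> 0\<close> by simp
  hence "\<forall>x\<in>S. \<bar>d x\<bar> = 0" unfolding A_def using assms(1) by (subst (asm) sum_nonneg_eq_0_iff) auto
  then show ?thesis using invD(1)[OF assms(5)] invD(1)[OF assms(6)] unfolding d_def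
    by (intro ext) (metis eq_iff_diff_eq_0 abs_0_eq)
qed

fun itv :: "'s set \<Rightarrow> ('s \<Rightarrow> 's \<Rightarrow> real) \<Rightarrow> ('s \<Rightarrow> real) \<Rightarrow> nat \<Rightarrow> 's \<Rightarrow> real" where
  "itv S Q u 0 = u"
| "itv S Q u (Suc k) = (\<lambda>y. if y \<in> S then \<Sum>x\<in>S. itv S Q u k x * Q x y else 0)"

lemma itv_prob:
  assumes "finite S" "stoch S Q" "\<forall>x. x \<notin> S \<longrightarrow> u x = 0" "\<forall>x\<in>S. 0 \<le> u x" "(\<Sum>x\<in>S. u x) = 1"
  shows "(\<forall>x. x \<notin> S \<longrightarrow> itv S Q u k x = 0) \<and> (\<forall>x\<in>S. 0 \<le> itv S Q u k x) \<and> (\<Sum>x\<in>S. itv S Q u k x) = 1"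
proof (induction k)
  case 0
  then show ?case using assms by simp
next
  case (Suc k)
  have "(\<Sum>y\<in>S. itv S Q u (Suc k) y) = (\<Sum>x\<in>S. itv S Q u k x * (\<Sum>y\<in>S. Q x y))"
    by (simp add: sum_distrib_left) (rule sum.swap)
  also have "\<dots> = 1" using Suc assms(2) by (simp add: stoch_def)
  finally show ?case using Suc assms(2) by (auto simp: stoch_def intro!: sum_nonneg)
qed

lemma exist_pos:
  assumes "finite S" "S \<noteq> {}" "stoch S Q" "\<And>x y. x \<in> S \<Longrightarrow> y \<in> S \<Longrightarrow> \<delta> \<le> Q x y" "\<delta> > 0"
  shows "\<exists>\<mu>. invariant_measure S Q \<mu>"
proof -
  define c where "c = 1 - real (card S) * \<delta>"
  obtain x0 where x0: "x0 \<in> S" using assms(2) by blast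
  have "real (card S) * \<delta> = (\<Sum>y\<in>S. \<delta>)" by simp
  also have "\<dots> \<le> (\<Sum>y\<in>S. Q x0 y)" using assms(4) x0 by (intro sum_mono) auto
  also have "\<dots> = 1" using assms(3) x0 by (simp add: stoch_def)
  finally have c0: "0 \<le> c" unfolding c_def by simp
  have cS: "real (card S) \<ge> 1" using assms(1,2) by (simp add: Suc_leI card_gt_0_iff)
  have "real (card S) * \<delta> > 0" using cS assms(5) by simp
  hence c1: "c < 1" unfolding c_def by simp
  define u0 where "u0 x = (if x \<in> S then 1 / real (card S) else 0)" for x
  have u0: "\<forall>x. x \<notin> S \<longrightarrow> u0 x = 0" "\<forall>x\<in>S. 0 \<le> u0 x" "(\<Sum>x\<in>S. u0 x) = 1"
    using cS by (auto simp: u0_def)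
  define f where "f = itv S Q u0"
  note fp = itv_prob[OF assms(1,3) u0, folded f_def]
  define D where "D k = (\<Sum>y\<in>S. \<bar>f (Suc k) y - f k y\<bar>)" for k
  have Dk: "D k \<le> c ^ k * D 0" for k
  proof (induction k)
    case (Suc k)
    have sd: "(\<Sum>x\<in>S. f (Suc k) x - f k x) = 0" using fp by (simp add: sum_subtractf)
    have "D (Suc k) = (\<Sum>y\<in>S. \<bar>\<Sum>x\<in>S. (f (Suc k) x - f k x) * Q x y\<bar>)"
      unfolding D_def f_def by (intro sum.cong) (auto simp: left_diff_distrib sum_subtractf)
    also have "\<dots> \<le> c * D k" unfolding c_def D_def by (rule dobrushin[OF assms(1,3,4) sd])
    also have "\<dots> \<le> c * (c ^ k * D 0)" using Suc c0 by (intro mult_left_mono) auto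
    finally show ?case by simp
  qed simp
  have conv: "convergent (\<lambda>k. f k y)" for y
  proof -
    have bnd: "norm (f (Suc k) y - f k y) \<le> D 0 * c ^ k" for k
    proof (cases "y \<in> S")
      case True
      have "\<bar>f (Suc k) y - f k y\<bar> \<le> D k" unfolding D_def
        using True assms(1) by (intro member_le_sum) auto
      then show ?thesis using Dk[of k] by (simp add: mult.commute)
    next
      case False
      then have "D 0 * c ^ k \<ge> 0" using c0 by (auto simp: D_def intro!: sum_nonneg)
      then show ?thesis using False fp by simp
    qed
    have "summable (\<lambda>k. D 0 * c ^ k)" using c0 c1 by (intro summable_mult summable_geometric) simp
    hence sm: "summable (\<lambda>k. f (Suc k) y - f k y)"
      by (rule summable_comparison_test[rotated]) (use bnd in blast)
    have eq: "(\<lambda>n. \<Sum>i<n. f (Suc i) y - f i y) = (\<lambda>n. f n y - f 0 y)"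
      by (rule ext, rule sum_lessThan_telescope)
    have "(\<lambda>n. f n y - f 0 y) \<longlonglongrightarrow> suminf (\<lambda>k. f (Suc k) y - f k y)"
      using summable_LIMSEQ[OF sm] unfolding eq .
    hence "(\<lambda>n. (f n y - f 0 y) + f 0 y) \<longlonglongrightarrow> suminf (\<lambda>k. f (Suc k) y - f k y) + f 0 y"
      by (intro tendsto_add tendsto_const)
    then show ?thesis unfolding convergent_def by auto
  qed
  define \<nu> where "\<nu> y = lim (\<lambda>k. f k y)" for y
  have L: "(\<lambda>k. f k y) \<longlonglongrightarrow> \<nu> y" for y
    unfolding \<nu>_def using conv convergent_LIMSEQ_iff by blast
  have z1: "\<nu> y = 0" if "y \<notin> S" for y
  proof -
    have "(\<lambda>k. f k y) = (\<lambda>k. 0)" using fp that by auto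
    then show ?thesis using L[of y] LIMSEQ_unique tendsto_const by metis
  qed
  have n1: "\<nu> y \<ge> 0" if "y \<in> S" for y
    using L[of y] fp that by (intro LIMSEQ_le_const[of "\<lambda>k. f k y"]) auto
  have s1: "(\<Sum>y\<in>S. \<nu> y) = 1"
  proof -
    have "(\<lambda>k. \<Sum>y\<in>S. f k y) \<longlonglongrightarrow> (\<Sum>y\<in>S. \<nu> y)" by (intro tendsto_sum L)
    moreover have "(\<lambda>k. \<Sum>y\<in>S. f k y) = (\<lambda>k. 1)" using fp by auto
    ultimately show ?thesis using LIMSEQ_unique tendsto_const by metis
  qed
  have st1: "(\<Sum>x\<in>S. \<nu> x * Q x y) = \<nu> y" if "y \<in> S" for y
  proof -
    have "(\<lambda>k. \<Sum>x\<in>S. f k x * Q x y) \<longlonglongrightarrow> (\<Sum>x\<in>S. \<nu> x * Q x y)"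
      by (intro tendsto_sum tendsto_mult_right L)
    moreover have "(\<lambda>k. \<Sum>x\<in>S. f k x * Q x y) = (\<lambda>k. f (Suc k) y)" using that by (auto simp: f_def)
    moreover have "(\<lambda>k. f (Suc k) y) \<longlonglongrightarrow> \<nu> y" using L LIMSEQ_Suc by blast
    ultimately show ?thesis using LIMSEQ_unique by metis
  qed
  have "invariant_measure S Q \<nu>" by (rule invI[OF z1 n1 s1 st1])
  then show ?thesis by (intro exI[where x=\<nu>])
qed

lemma mp_one:
  assumes "x \<in> S" "finite S"
  shows "mp S P 1 x y = P x y"
proof -
  have "mp S P 1 x y = (\<Sum>k\<in>S. if x = k then P k y else 0)"
    by (simp only: One_nat_def mp.simps) (intro sum.cong; simp)
  also have "\<dots> = P x y" using assms by simp
  finally show ?thesis .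
qed

lemma stationary_unique:
  assumes "finite S" "S \<noteq> {}" "stoch S P" "\<forall>x\<in>S. \<forall>y\<in>S. 0 < mp S P m x y"
  shows "\<exists>!\<mu>. invariant_measure S P \<mu>"
proof -
  define Q where "Q = mp S P m"
  define \<delta> where "\<delta> = Min ((\<lambda>(x,y). Q x y) ` (S \<times> S))"
  have fin: "finite ((\<lambda>(x,y). Q x y) ` (S \<times> S))" using assms(1) by simp
  have ne: "(\<lambda>(x,y). Q x y) ` (S \<times> S) \<noteq> {}" using assms(2) by simp
  have dpos: "\<delta> > 0" using Min_in[OF fin ne] assms(4) unfolding \<delta>_def Q_def by auto
  have dle: "\<delta> \<le> Q x y" if "x \<in> S" "y \<in> S" for x y
    unfolding \<delta>_def using that by (intro Min_le[OF fin]) auto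
  have Qs: "stoch S Q" unfolding Q_def by (rule mp_stoch[OF assms(1,3)])
  have uq: "\<mu> = \<nu>" if "invariant_measure S Q \<mu>" "invariant_measure S Q \<nu>" for \<mu> \<nu>
    by (rule unique_pos[OF assms(1) Qs dle dpos that])
  obtain \<nu> where nu: "invariant_measure S Q \<nu>" using exist_pos[OF assms(1,2) Qs dle dpos] by blast
  define w where "w y = (if y \<in> S then \<Sum>x\<in>S. \<nu> x * P x y else 0)" for y
  have Pst: "\<forall>x\<in>S. \<forall>y\<in>S. 0 \<le> P x y" "\<forall>x\<in>S. (\<Sum>y\<in>S. P x y) = 1" using assms(3) by (auto simp: stoch_def)
  have "invariant_measure S Q w"
  proof -
    have "(\<Sum>y\<in>S. w y) = (\<Sum>x\<in>S. \<nu> x * (\<Sum>y\<in>S. P x y))"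
      by (simp add: w_def sum_distrib_left) (rule sum.swap)
    also have "\<dots> = 1" using Pst invD(3)[OF nu] by simp
    finally have s1: "(\<Sum>y\<in>S. w y) = 1" .
    have st: "(\<Sum>x\<in>S. w x * Q x y) = w y" if y: "y \<in> S" for y
    proof -
      have "(\<Sum>x\<in>S. w x * Q x y) = (\<Sum>x\<in>S. (\<Sum>z\<in>S. \<nu> z * P z x) * Q x y)"
        by (simp add: w_def)
      also have "\<dots> = (\<Sum>z\<in>S. \<nu> z * (\<Sum>x\<in>S. P z x * mp S P m x y))"
        by (simp add: sum_distrib_left sum_distrib_right mult.assoc Q_def) (rule sum.swap)
      also have "\<dots> = (\<Sum>z\<in>S. \<nu> z * (\<Sum>x\<in>S. mp S P 1 z x * mp S P m x y))"
      proof (intro sum.cong refl)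
        fix z assume "z \<in> S"
        then have aux: "mp S P 1 z = P z" by (intro ext mp_one assms(1))
        show "\<nu> z * (\<Sum>x\<in>S. P z x * mp S P m x y) = \<nu> z * (\<Sum>x\<in>S. mp S P 1 z x * mp S P m x y)"
          by (simp only: aux)
      qed
      also have "\<dots> = (\<Sum>z\<in>S. \<nu> z * mp S P (Suc m) z y)"
        using mp_add[OF assms(1) y, of P 1 m] by simp
      also have "\<dots> = (\<Sum>x\<in>S. (\<Sum>z\<in>S. \<nu> z * Q z x) * P x y)"
        by (simp add: sum_distrib_left sum_distrib_right mult.assoc Q_def) (rule sum.swap)
      also have "\<dots> = (\<Sum>x\<in>S. \<nu> x * P x y)" using invD(4)[OF nu] by (intro sum.cong refl) simp
      finally show ?thesis using y by (simp add: w_def)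
    qed
    have "w x = 0" if "x \<notin> S" for x using that by (simp add: w_def)
    moreover have "0 \<le> w x" if "x \<in> S" for x using that Pst invD(2)[OF nu]
      by (auto simp: w_def intro!: sum_nonneg)
    ultimately show ?thesis by (intro invI[OF _ _ s1 st])
  qed
  hence "w = \<nu>" using uq nu by blast
  hence wn: "w = \<nu>" .
  have "(\<Sum>x\<in>S. \<nu> x * P x y) = \<nu> y" if "y \<in> S" for y
  proof -
    have "\<nu> y = w y" using wn by simp
    also have "w y = (\<Sum>x\<in>S. \<nu> x * P x y)" using that by (simp add: w_def)
    finally show ?thesis by simp
  qed
  hence "invariant_measure S P \<nu>" by (intro invI[OF invD(1-3)[OF nu]])
  moreover have "\<mu> = \<nu>" if "invariant_measure S P \<mu>" for \<mu>
    using uq[OF inv_mp[OF assms(1) that, of m, folded Q_def] nu] .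
  ultimately show ?thesis by (intro ex1I[of _ \<nu>])
qed




lemma mp_ge:
  assumes "finite S" "stoch S P" "x \<in> S" "z \<in> S" "y \<in> S"
  shows "mp S P a x z * mp S P b z y \<le> mp S P (a+b) x y"
proof -
  have "mp S P a x z * mp S P b z y \<le> (\<Sum>w\<in>S. mp S P a x w * mp S P b w y)"
    using assms by (intro member_le_sum) (auto intro!: mult_nonneg_nonneg mp_nonneg)
  also have "\<dots> = mp S P (a+b) x y" using mp_add[OF assms(1,5)] by simp
  finally show ?thesis .
qed

lemma semigroup_large:
  fixes A :: "nat set"
  assumes pos: "\<And>a. a \<in> A \<Longrightarrow> 0 < a" and add: "\<And>a b. a \<in> A \<Longrightarrow> b \<in> A \<Longrightarrow> a + b \<in> A"
    and g: "Gcd A = 1"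
  shows "\<exists>N0. \<forall>n\<ge>N0. n \<in> A"
proof -
  have mult: "k * x \<in> A" if "x \<in> A" "k \<ge> 1" for k x
    using that(2)
  proof (induction k)
    case (Suc k)
    then show ?case using that(1) add by (cases "k = 0") auto
  qed simp
  define A0 where "A0 = insert 0 A"
  have add0: "a + b \<in> A0" if "a \<in> A0" "b \<in> A0" for a b
    using that add by (auto simp: A0_def)
  define G where "G = {int a - int b | a b. a \<in> A0 \<and> b \<in> A0}"
  have Gadd: "g + h \<in> G" if gG: "g \<in> G" and hG: "h \<in> G" for g h
  proof -
    obtain a b where ab: "a \<in> A0" "b \<in> A0" "g = int a - int b" using gG unfolding G_def by blast
    obtain c d where cd: "c \<in> A0" "d \<in> A0" "h = int c - int d" using hG unfolding G_def by blast
    have "g + h = int (a + c) - int (b + d)" using ab cd by simp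
    then show ?thesis using add0 ab cd unfolding G_def by blast
  qed
  have Gneg: "- g \<in> G" if gG: "g \<in> G" for g
  proof -
    obtain a b where ab: "a \<in> A0" "b \<in> A0" "g = int a - int b" using gG unfolding G_def by blast
    have "- g = int b - int a" using ab by simp
    then show ?thesis using ab unfolding G_def by blast
  qed
  have G0: "0 \<in> G" unfolding G_def A0_def by force
  have Gnat: "int n * g \<in> G" if "g \<in> G" for n g
    by (induction n) (auto simp: G0 Gadd that distrib_right)
  have Gmul: "k * g \<in> G" if "g \<in> G" for k g
  proof (cases "k \<ge> 0")
    case True
    then show ?thesis using Gnat[OF that, of "nat k"] by simp
  next
    case False
    then have "k * g = - (int (nat (-k)) * g)" by simp
    then show ?thesis using Gneg Gnat that by metis
  qed
  have "A \<noteq> {}" using g by auto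
  then obtain a0 where a0: "a0 \<in> A" by blast
  have aG: "int a \<in> G" if "a \<in> A" for a
  proof -
    have "int a = int a - int 0" by simp
    then show ?thesis using that unfolding G_def A0_def by blast
  qed
  define d where "d = (LEAST n::nat. 0 < n \<and> int n \<in> G)"
  have d: "0 < d \<and> int d \<in> G" unfolding d_def
    by (rule LeastI[of _ a0]) (use a0 pos aG in auto)
  have dmin: "d \<le> n" if "0 < n" "int n \<in> G" for n
    unfolding d_def by (rule Least_le) (use that in auto)
  have ddvd: "int d dvd g" if "g \<in> G" for g
  proof -
    define r where "r = g mod int d"
    have "r = g + (- (g div int d)) * int d" unfolding r_def by (simp add: minus_div_mult_eq_mod[symmetric])
    hence rG: "r \<in> G" using Gadd Gmul d that by metis
    have r0: "0 \<le> r" "r < int d" unfolding r_def using d by auto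
    have "r = 0"
    proof (rule ccontr)
      assume "r \<noteq> 0"
      then have "0 < nat r" "int (nat r) \<in> G" using r0 rG by auto
      then have "d \<le> nat r" by (rule dmin)
      then show False using r0 by linarith
    qed
    then show ?thesis unfolding r_def by (simp add: dvd_eq_mod_eq_0)
  qed
  have "d dvd a" if "a \<in> A" for a using ddvd[OF aG[OF that]] by simp
  hence "d dvd Gcd A" by (rule Gcd_greatest)
  hence d1: "d = 1" using g by simp
  obtain p q where pq: "p \<in> A0" "q \<in> A0" "int 1 = int p - int q" using d unfolding d1 G_def by auto
  hence pq1: "p = q + 1" by simp
  show ?thesis
  proof (cases "q = 0")
    case True
    then have "1 \<in> A" using pq pq1 by (auto simp: A0_def)
    then show ?thesis using mult[of 1] by auto
  next
    case False
    then have qA: "q \<in> A" and pA: "p \<in> A" using pq pq1 by (auto simp: A0_def)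
    have "n \<in> A" if n: "n \<ge> q * q" for n
    proof -
      define a where "a = n div q"
      define r where "r = n mod q"
      have "q * q div q \<le> a" unfolding a_def using n by (intro div_le_mono)
      hence aq: "q \<le> a" using False by simp
      have rq: "r < q" unfolding r_def using False by simp
      have n_eq: "n = q * a + r" unfolding a_def r_def by simp
      also have "\<dots> = (a - r) * q + r * p" using pq1 rq aq
        by (simp add: algebra_simps diff_mult_distrib)
      finally have n2: "n = (a - r) * q + r * p" .
      have arA: "(a - r) * q \<in> A" using mult[OF qA] rq aq by simp
      show ?thesis
      proof (cases "r = 0")
        case True
        then show ?thesis using arA n2 by simp
      next
        case False
        then have "r * p \<in> A" using mult[OF pA] by simp
        then show ?thesis using arA n2 add by simp
      qed
    qed
    then show ?thesis by blast
  qed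
qed

lemma primitive:
  assumes fin: "finite S" and st: "stoch S P"
    and irr: "\<forall>i\<in>S. \<forall>j\<in>S. \<exists>m. 0 < mp S P m i j"
    and ap: "\<forall>i\<in>S. Gcd {m. 0 < m \<and> 0 < mp S P m i i} = 1"
  shows "\<exists>M. \<forall>i\<in>S. \<forall>j\<in>S. 0 < mp S P M i j"
proof -
  have "\<exists>N0. \<forall>n\<ge>N0. 0 < mp S P n i i" if i: "i \<in> S" for i
  proof -
    have "\<exists>N0. \<forall>n\<ge>N0. n \<in> {m. 0 < m \<and> 0 < mp S P m i i}"
    proof (rule semigroup_large)
      fix a b assume "a \<in> {m. 0 < m \<and> 0 < mp S P m i i}" "b \<in> {m. 0 < m \<and> 0 < mp S P m i i}"
      then have "0 < a + b" "0 < mp S P a i i * mp S P b i i" by auto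
      moreover have "mp S P a i i * mp S P b i i \<le> mp S P (a+b) i i" by (rule mp_ge[OF fin st i i i])
      ultimately show "a + b \<in> {m. 0 < m \<and> 0 < mp S P m i i}" by simp
    qed (use ap i in auto)
    then show ?thesis by auto
  qed
  then obtain Nf where Nf: "\<And>i n. i \<in> S \<Longrightarrow> n \<ge> Nf i \<Longrightarrow> 0 < mp S P n i i" by metis
  obtain mf where mf: "\<And>i j. i \<in> S \<Longrightarrow> j \<in> S \<Longrightarrow> 0 < mp S P (mf i j) i j" using irr by metis
  define M where "M = Max (Nf ` S) + Max ((\<lambda>(i,j). mf i j) ` (S \<times> S))"
  have "0 < mp S P M i j" if ij: "i \<in> S" "j \<in> S" for i j
  proof -
    have "Nf i \<le> Max (Nf ` S)" using fin ij by simp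
    moreover have "mf i j \<le> Max ((\<lambda>(i,j). mf i j) ` (S \<times> S))"
      using fin ij by (intro Max_ge) auto
    ultimately have le: "Nf i \<le> M - mf i j" and eq: "M = (M - mf i j) + mf i j" unfolding M_def by auto
    have "0 < mp S P (M - mf i j) i i * mp S P (mf i j) i j"
      using Nf[OF ij(1) le] mf[OF ij] by simp
    also have "\<dots> \<le> mp S P M i j" using mp_ge[OF fin st ij(1) ij(1) ij(2)] eq by metis
    finally show ?thesis .
  qed
  then show ?thesis by blast
qed

lemma mat_pow_mp: "mat_pow K T k = mp {1..K} T k"
  by (induction k) auto

lemma rs_stoch: "row_stochastic K T \<Longrightarrow> stoch {1..K} T"
  unfolding row_stochastic_def stoch_def by blast

lemma T_primitive:
  assumes "row_stochastic K T" "irreducible_mat K T" "aperiodic_mat K T"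
  shows "\<exists>M. \<forall>i\<in>{1..K}. \<forall>j\<in>{1..K}. 0 < mp {1..K} T M i j"
  using assms(2,3) unfolding irreducible_mat_def aperiodic_mat_def period_of_def mat_pow_mp
  by (intro primitive rs_stoch assms(1)) auto




lemma nbhd_sub:
  assumes "N \<ge> 1"
  shows "nbhd N nv n \<subseteq> {1..N}"
proof
  fix i assume "i \<in> nbhd N nv n"
  then obtain j where i: "i = nat (((int n + j - 1) mod int N) + 1)" unfolding nbhd_def by blast
  define r where "r = (int n + j - 1) mod int N"
  have r: "0 \<le> r" "r < int N" unfolding r_def using assms by auto
  have "int i = r + 1" unfolding i r_def[symmetric] using r by simp
  then have "1 \<le> i" "i \<le> N" using r by linarith+
  then show "i \<in> {1..N}" by simp
qed

lemma nbhd_self: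
  assumes "n \<in> {1..N}"
  shows "n \<in> nbhd N nv n"
proof -
  have "(int n - 1) mod int N = int n - 1" using assms by (intro mod_pos_pos_trivial) auto
  then have "n = nat (((int n + 0 - 1) mod int N) + 1) \<and> - int nv \<le> 0 \<and> (0::int) \<le> int nv"
    using assms by simp
  then have "\<exists>j. n = nat (((int n + j - 1) mod int N) + 1) \<and> - int nv \<le> j \<and> j \<le> int nv"
    by (rule exI)
  then show ?thesis unfolding nbhd_def by (simp only: mem_Collect_eq)
qed

lemma nbhd_fin: "N \<ge> 1 \<Longrightarrow> finite (nbhd N nv n)"
  by (rule finite_subset[OF nbhd_sub]) auto

lemma nbhd_card:
  assumes "n \<in> {1..N}"
  shows "card (nbhd N nv n) > 0"
proof -
  have "N \<ge> 1" using assms by simp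
  then have "finite (nbhd N nv n)" by (rule nbhd_fin)
  moreover have "nbhd N nv n \<noteq> {}" using nbhd_self[OF assms, of nv] by blast
  ultimately show ?thesis by (simp add: card_gt_0_iff)
qed

lemma marg_prod:
  fixes f :: "'i \<Rightarrow> 'b \<Rightarrow> real"
  assumes "finite I" "n \<in> I" "k \<in> B" "finite B" "\<And>m. m \<in> I \<Longrightarrow> (\<Sum>a\<in>B. f m a) = 1"
  shows "(\<Sum>y\<in>{y \<in> PiE I (\<lambda>_. B). y n = k}. \<Prod>m\<in>I. f m (y m)) = f n k"
proof -
  define g where "g m a = (if m = n then (if a = k then f m a else 0) else f m a)" for m a
  have fin: "finite (PiE I (\<lambda>_. B))" using assms(1,4) by (simp add: finite_PiE)
  have "(\<Sum>y\<in>{y \<in> PiE I (\<lambda>_. B). y n = k}. \<Prod>m\<in>I. f m (y m))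
      = (\<Sum>y\<in>PiE I (\<lambda>_. B). if y n = k then \<Prod>m\<in>I. f m (y m) else 0)"
    by (rule sum.inter_filter[OF fin])
  also have "\<dots> = (\<Sum>y\<in>PiE I (\<lambda>_. B). \<Prod>m\<in>I. g m (y m))"
  proof (rule sum.cong[OF refl])
    fix y assume y: "y \<in> PiE I (\<lambda>_. B)"
    show "(if y n = k then \<Prod>m\<in>I. f m (y m) else 0) = (\<Prod>m\<in>I. g m (y m))"
    proof (cases "y n = k")
      case True
      have "g m (y m) = f m (y m)" for m using True by (simp add: g_def)
      then show ?thesis using True by simp
    next
      case False
      have "g n (y n) = 0" using False by (simp add: g_def)
      then have "(\<Prod>m\<in>I. g m (y m)) = 0" using assms(1,2) by (intro prod_zero) blast+
      then show ?thesis using False by simp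
    qed
  qed
  also have "\<dots> = (\<Prod>m\<in>I. \<Sum>a\<in>B. g m a)"
    by (rule prod_sum_PiE[symmetric]) (simp_all add: assms(1,4))
  also have "\<dots> = (\<Prod>m\<in>I. if m = n then f n k else 1)"
  proof (rule prod.cong[OF refl])
    fix m assume m: "m \<in> I"
    show "(\<Sum>a\<in>B. g m a) = (if m = n then f n k else 1)"
    proof (cases "m = n")
      case True
      have "(\<Sum>a\<in>B. g m a) = (\<Sum>a\<in>B. if a = k then f n a else 0)"
        using True by (simp add: g_def)
      also have "\<dots> = f n k" using assms(3,4) by simp
      finally show ?thesis using True by simp
    next
      case False
      then show ?thesis using assms(5)[OF m] by (simp add: g_def)
    qed
  qed
  also have "\<dots> = f n k" using assms(1,2) by simp
  finally show ?thesis .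
qed




definition loc :: "nat \<Rightarrow> nat \<Rightarrow> (nat \<Rightarrow> nat \<Rightarrow> real) \<Rightarrow> (nat \<Rightarrow> nat) \<Rightarrow> nat \<Rightarrow> nat \<Rightarrow> real" where
  "loc N nv T x n k = (1 / real (card (nbhd N nv n))) * (\<Sum>i\<in>nbhd N nv n. T (x i) k)"

lemma global_loc: "global_trans N nv T x y = (\<Prod>n\<in>{1..N}. loc N nv T x n (y n))"
  unfolding global_trans_def loc_def by simp

lemma cs_mem: "x \<in> config_space N K \<Longrightarrow> i \<in> {1..N} \<Longrightarrow> x i \<in> {1..K}"
  unfolding config_space_def by auto

lemma loc_sum:
  assumes "N \<ge> 1" "row_stochastic K T" "x \<in> config_space N K" "n \<in> {1..N}"
  shows "(\<Sum>k\<in>{1..K}. loc N nv T x n k) = 1"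
proof -
  have "(\<Sum>k\<in>{1..K}. loc N nv T x n k) = (1 / real (card (nbhd N nv n))) * (\<Sum>k\<in>{1..K}. \<Sum>i\<in>nbhd N nv n. T (x i) k)"
    unfolding loc_def by (rule sum_distrib_left[symmetric])
  also have "\<dots> = (1 / real (card (nbhd N nv n))) * (\<Sum>i\<in>nbhd N nv n. \<Sum>k\<in>{1..K}. T (x i) k)"
    by (subst sum.swap) (rule refl)
  also have "\<dots> = (1 / real (card (nbhd N nv n))) * (\<Sum>i\<in>nbhd N nv n. 1)"
    using assms nbhd_sub[OF assms(1), of nv n] cs_mem[OF assms(3)]
    by (intro arg_cong2[where f="(*)"] sum.cong refl) (auto simp: row_stochastic_def)
  also have "\<dots> = 1" using nbhd_card[OF assms(4), of nv] by simp
  finally show ?thesis .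
qed

lemma loc_nonneg:
  assumes "N \<ge> 1" "row_stochastic K T" "x \<in> config_space N K" "k \<in> {1..K}"
  shows "0 \<le> loc N nv T x n k"
  unfolding loc_def using assms nbhd_sub[OF assms(1), of nv n] cs_mem[OF assms(3)]
  by (intro mult_nonneg_nonneg sum_nonneg) (auto simp: row_stochastic_def)

lemma cs_fin: "finite (config_space N K)"
  unfolding config_space_def by (simp add: finite_PiE)

lemma cs_ne: "K \<ge> 1 \<Longrightarrow> config_space N K \<noteq> {}"
  unfolding config_space_def by (simp add: PiE_eq_empty_iff)

lemma global_stoch:
  assumes "N \<ge> 1" "row_stochastic K T"
  shows "stoch (config_space N K) (global_trans N nv T)"
proof -
  have "(\<Sum>y\<in>config_space N K. global_trans N nv T x y) = 1" if x: "x \<in> config_space N K" for x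
  proof -
    have "(\<Sum>y\<in>config_space N K. global_trans N nv T x y) = (\<Prod>n\<in>{1..N}. \<Sum>k\<in>{1..K}. loc N nv T x n k)"
      unfolding global_loc config_space_def by (rule prod_sum_PiE[symmetric]) auto
    also have "\<dots> = 1" using loc_sum[OF assms x] by simp
    finally show ?thesis .
  qed
  moreover have "0 \<le> global_trans N nv T x y" if "x \<in> config_space N K" "y \<in> config_space N K" for x y
    unfolding global_loc using loc_nonneg[OF assms that(1)] cs_mem[OF that(2)]
    by (intro prod_nonneg) auto
  ultimately show ?thesis unfolding stoch_def by blast
qed

definition ccst :: "nat \<Rightarrow> nat \<Rightarrow> real" where
  "ccst N nv = (\<Prod>n\<in>{1..N}. 1 / real (card (nbhd N nv n)))"

lemma ccst_pos: "ccst N nv > 0"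
  unfolding ccst_def using nbhd_card by (intro prod_pos) auto

lemma global_lower:
  assumes "N \<ge> 1" "row_stochastic K T" "x \<in> config_space N K" "y \<in> config_space N K"
  shows "ccst N nv * (\<Prod>n\<in>{1..N}. T (x n) (y n)) \<le> global_trans N nv T x y"
proof -
  have "ccst N nv * (\<Prod>n\<in>{1..N}. T (x n) (y n)) = (\<Prod>n\<in>{1..N}. (1 / real (card (nbhd N nv n))) * T (x n) (y n))"
    unfolding ccst_def by (rule prod.distrib[symmetric])
  also have "\<dots> \<le> (\<Prod>n\<in>{1..N}. loc N nv T x n (y n))"
  proof (rule prod_mono)
    fix n assume n: "n \<in> {1..N}"
    have T0: "0 \<le> T (x n) (y n)" using assms(2) cs_mem[OF assms(3) n] cs_mem[OF assms(4) n]
      by (auto simp: row_stochastic_def)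
    have "T (x n) (y n) \<le> (\<Sum>i\<in>nbhd N nv n. T (x i) (y n))"
      using assms nbhd_sub[OF assms(1), of nv n] cs_mem[OF assms(3)] cs_mem[OF assms(4) n]
        nbhd_self[OF n, of nv] nbhd_fin[OF assms(1)]
      by (intro member_le_sum) (auto simp: row_stochastic_def)
    then show "0 \<le> 1 / real (card (nbhd N nv n)) * T (x n) (y n) \<and>
          1 / real (card (nbhd N nv n)) * T (x n) (y n) \<le> loc N nv T x n (y n)"
      unfolding loc_def using T0 by (intro conjI mult_nonneg_nonneg mult_left_mono) auto
  qed
  finally show ?thesis unfolding global_loc .
qed




lemma cs_ext:
  assumes "x \<in> config_space N K" "y \<in> config_space N K" "x \<noteq> y"
  shows "\<exists>n\<in>{1..N}. x n \<noteq> y n"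
  using assms PiE_ext unfolding config_space_def by metis

lemma mp_global_lower:
  assumes "N \<ge> 1" "row_stochastic K T" "x \<in> config_space N K" "y \<in> config_space N K"
  shows "ccst N nv ^ k * (\<Prod>n\<in>{1..N}. mp {1..K} T k (x n) (y n))
         \<le> mp (config_space N K) (global_trans N nv T) k x y"
  using assms(4)
proof (induction k arbitrary: y)
  case 0
  show ?case
  proof (cases "x = y")
    case True
    then show ?thesis by simp
  next
    case False
    then obtain n where n: "n \<in> {1..N}" "x n \<noteq> y n" using cs_ext[OF assms(3) 0] by blast
    have "(\<Prod>n\<in>{1..N}. mp {1..K} T 0 (x n) (y n)) = 0"
      using n by (intro prod_zero) auto
    moreover have "mp (config_space N K) (global_trans N nv T) 0 x y = 0" using False by simp
    ultimately show ?thesis by (simp only: mult_zero_right order_refl)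
  qed
next
  case (Suc k)
  define CS where "CS = config_space N K"
  define G where "G = global_trans N nv T"
  define c where "c = ccst N nv"
  have c0: "0 \<le> c" unfolding c_def using ccst_pos less_imp_le by blast
  have st: "stoch {1..K} T" using assms(2) by (rule rs_stoch)
  have Gst: "stoch CS G" unfolding CS_def G_def by (rule global_stoch[OF assms(1,2)])
  have "c ^ Suc k * (\<Prod>n\<in>{1..N}. mp {1..K} T (Suc k) (x n) (y n))
      = c ^ Suc k * (\<Prod>n\<in>{1..N}. \<Sum>a\<in>{1..K}. mp {1..K} T k (x n) a * T a (y n))"
    by simp
  also have "\<dots> = c ^ Suc k * (\<Sum>z\<in>CS. \<Prod>n\<in>{1..N}. mp {1..K} T k (x n) (z n) * T (z n) (y n))"
    unfolding CS_def config_space_def by (subst prod_sum_PiE) auto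
  also have "\<dots> = (\<Sum>z\<in>CS. (c ^ k * (\<Prod>n\<in>{1..N}. mp {1..K} T k (x n) (z n))) * (c * (\<Prod>n\<in>{1..N}. T (z n) (y n))))"
    by (simp add: sum_distrib_left prod.distrib mult_ac)
  also have "\<dots> \<le> (\<Sum>z\<in>CS. mp CS G k x z * G z y)"
  proof (rule sum_mono)
    fix z assume z: "z \<in> CS"
    have "0 \<le> mp CS G k x z" using mp_nonneg[OF Gst] assms(3) z unfolding CS_def by blast
    moreover have "0 \<le> c * (\<Prod>n\<in>{1..N}. T (z n) (y n))"
      using c0 st cs_mem[OF z[unfolded CS_def]] cs_mem[OF Suc.prems]
      by (intro mult_nonneg_nonneg prod_nonneg) (auto simp: stoch_def)
    moreover have "c ^ k * (\<Prod>n\<in>{1..N}. mp {1..K} T k (x n) (z n)) \<le> mp CS G k x z"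
      using Suc.IH[of z] z unfolding CS_def G_def c_def by blast
    moreover have "c * (\<Prod>n\<in>{1..N}. T (z n) (y n)) \<le> G z y"
      unfolding c_def G_def using global_lower[OF assms(1,2) z[unfolded CS_def] Suc.prems] .
    ultimately show "(c ^ k * (\<Prod>n\<in>{1..N}. mp {1..K} T k (x n) (z n))) * (c * (\<Prod>n\<in>{1..N}. T (z n) (y n)))
        \<le> mp CS G k x z * G z y"
      by (intro mult_mono) auto
  qed
  also have "\<dots> = mp CS G (Suc k) x y" by simp
  finally show ?case unfolding CS_def G_def c_def .
qed

lemma global_primitive:
  assumes "N \<ge> 1" "row_stochastic K T" "irreducible_mat K T" "aperiodic_mat K T"
  shows "\<exists>M. \<forall>x\<in>config_space N K. \<forall>y\<in>config_space N K.
            0 < mp (config_space N K) (global_trans N nv T) M x y"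
proof -
  obtain M where M: "\<forall>i\<in>{1..K}. \<forall>j\<in>{1..K}. 0 < mp {1..K} T M i j"
    using T_primitive[OF assms(2-4)] by blast
  have "0 < mp (config_space N K) (global_trans N nv T) M x y"
    if x: "x \<in> config_space N K" and y: "y \<in> config_space N K" for x y
  proof -
    have "0 < ccst N nv ^ M * (\<Prod>n\<in>{1..N}. mp {1..K} T M (x n) (y n))"
      using ccst_pos M cs_mem[OF x] cs_mem[OF y] by (intro mult_pos_pos zero_less_power prod_pos) auto
    also have "\<dots> \<le> mp (config_space N K) (global_trans N nv T) M x y"
      by (rule mp_global_lower[OF assms(1,2) x y])
    finally show ?thesis .
  qed
  then show ?thesis by blast
qed

lemma T_from_global:
  assumes "N \<ge> 1" "row_stochastic K T" "i \<in> {1..K}" "j \<in> {1..K}"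
  shows "T i j = (\<Sum>y\<in>{y \<in> config_space N K. y 1 = j}.
                   global_trans N nv T (\<lambda>n. if n \<in> {1..N} then i else undefined) y)"
proof -
  define x0 where "x0 = (\<lambda>n. if n \<in> {1..N} then i else undefined)"
  have x0: "x0 \<in> config_space N K" using assms(3) unfolding x0_def config_space_def by auto
  have one: "(1::nat) \<in> {1..N}" using assms(1) by simp
  have "(\<Sum>y\<in>{y \<in> config_space N K. y 1 = j}. global_trans N nv T x0 y)
      = (\<Sum>y\<in>{y \<in> PiE {1..N} (\<lambda>_. {1..K}). y 1 = j}. \<Prod>m\<in>{1..N}. loc N nv T x0 m (y m))"
    unfolding global_loc config_space_def ..
  also have "\<dots> = loc N nv T x0 1 j"
    by (rule marg_prod[OF _ one assms(4)]) (use loc_sum[OF assms(1,2) x0] in auto)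
  also have "\<dots> = (1 / real (card (nbhd N nv 1))) * (\<Sum>i'\<in>nbhd N nv 1. T i j)"
    unfolding loc_def using nbhd_sub[OF assms(1), of nv 1] unfolding x0_def
    by (intro arg_cong2[where f="(*)"] sum.cong refl) auto
  also have "\<dots> = T i j" using nbhd_card[OF one, of nv] by simp
  finally show ?thesis unfolding x0_def by simp
qed




lemma marg_group:
  assumes "i \<in> {1..N}"
  shows "(\<Sum>x\<in>config_space N K. h x) = (\<Sum>j\<in>{1..K}. \<Sum>x\<in>{x \<in> config_space N K. x i = j}. h x)"
  by (rule sum.group[symmetric]) (use cs_fin cs_mem[OF _ assms] in auto)

lemma marg_sum1:
  assumes "invariant_measure (config_space N K) P \<pi>" "i \<in> {1..N}"
  shows "(\<Sum>k\<in>{1..K}. marginal N K \<pi> i k) = 1"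
  unfolding marginal_def using marg_group[OF assms(2), of \<pi> K] invD(3)[OF assms(1)] by simp

lemma marg_eq:
  assumes "N \<ge> 1" "row_stochastic K T" "invariant_measure (config_space N K) (global_trans N nv T) \<pi>"
    and n: "n \<in> {1..N}" and k: "k \<in> {1..K}"
  shows "marginal N K \<pi> n k = (1 / real (card (nbhd N nv n))) *
           (\<Sum>i\<in>nbhd N nv n. \<Sum>j\<in>{1..K}. marginal N K \<pi> i j * T j k)"
proof -
  define CS where "CS = config_space N K"
  define G where "G = global_trans N nv T"
  define c where "c = 1 / real (card (nbhd N nv n))"
  have inv: "invariant_measure CS G \<pi>" using assms(3) unfolding CS_def G_def .
  have "marginal N K \<pi> n k = (\<Sum>y\<in>{y \<in> CS. y n = k}. \<pi> y)" unfolding marginal_def CS_def ..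
  also have "\<dots> = (\<Sum>y\<in>{y \<in> CS. y n = k}. \<Sum>x\<in>CS. \<pi> x * G x y)"
    using invD(4)[OF inv] by (intro sum.cong refl) auto
  also have "\<dots> = (\<Sum>x\<in>CS. \<pi> x * (\<Sum>y\<in>{y \<in> CS. y n = k}. G x y))"
    by (subst sum.swap) (simp add: sum_distrib_left)
  also have "\<dots> = (\<Sum>x\<in>CS. \<pi> x * loc N nv T x n k)"
  proof (intro sum.cong refl arg_cong2[where f="(*)"])
    fix x assume x: "x \<in> CS"
    show "(\<Sum>y\<in>{y \<in> CS. y n = k}. G x y) = loc N nv T x n k"
      unfolding CS_def G_def global_loc config_space_def
      by (rule marg_prod[OF _ n k]) (use loc_sum[OF assms(1,2) x[unfolded CS_def]] in auto)
  qed
  also have "\<dots> = c * (\<Sum>i\<in>nbhd N nv n. \<Sum>x\<in>CS. \<pi> x * T (x i) k)"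
    unfolding loc_def c_def
    by (subst sum.swap) (simp add: sum_distrib_left mult_ac)
  also have "\<dots> = c * (\<Sum>i\<in>nbhd N nv n. \<Sum>j\<in>{1..K}. marginal N K \<pi> i j * T j k)"
  proof (intro arg_cong2[where f="(*)"] sum.cong refl)
    fix i assume i: "i \<in> nbhd N nv n"
    have i': "i \<in> {1..N}" using i nbhd_sub[OF assms(1)] by blast
    have "(\<Sum>x\<in>CS. \<pi> x * T (x i) k) = (\<Sum>j\<in>{1..K}. \<Sum>x\<in>{x \<in> CS. x i = j}. \<pi> x * T (x i) k)"
      unfolding CS_def by (rule marg_group[OF i'])
    also have "\<dots> = (\<Sum>j\<in>{1..K}. \<Sum>x\<in>{x \<in> CS. x i = j}. \<pi> x * T j k)"
      by (intro sum.cong refl) auto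
    also have "\<dots> = (\<Sum>j\<in>{1..K}. marginal N K \<pi> i j * T j k)"
      unfolding marginal_def CS_def by (simp add: sum_distrib_right)
    finally show "(\<Sum>x\<in>CS. \<pi> x * T (x i) k) = (\<Sum>j\<in>{1..K}. marginal N K \<pi> i j * T j k)" .
  qed
  finally show ?thesis unfolding c_def .
qed

lemma marg_contract:
  fixes d :: "nat \<Rightarrow> nat \<Rightarrow> real"
  assumes N1: "N \<ge> 1" and rs: "row_stochastic K T"
    and M: "\<forall>i\<in>{1..K}. \<forall>j\<in>{1..K}. 0 < mp {1..K} T M i j"
    and ds: "\<And>n. n \<in> {1..N} \<Longrightarrow> (\<Sum>k\<in>{1..K}. d n k) = 0"
    and de: "\<And>n k. n \<in> {1..N} \<Longrightarrow> k \<in> {1..K} \<Longrightarrow>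
              d n k = (1 / real (card (nbhd N nv n))) * (\<Sum>i\<in>nbhd N nv n. \<Sum>j\<in>{1..K}. d i j * T j k)"
    and n: "n \<in> {1..N}" and k: "k \<in> {1..K}"
  shows "d n k = 0"
proof -
  define S where "S = {1..K::nat}"
  have finS: "finite S" and kS: "k \<in> S" using k by (auto simp: S_def)
  have st: "stoch S T" unfolding S_def by (rule rs_stoch[OF rs])
  define Q where "Q = mp S T M"
  have Qs: "stoch S Q" unfolding Q_def by (rule mp_stoch[OF finS st])
  define \<delta> where "\<delta> = Min ((\<lambda>(x,y). Q x y) ` (S \<times> S))"
  have fin: "finite ((\<lambda>(x,y). Q x y) ` (S \<times> S))" using finS by simp
  have ne: "(\<lambda>(x,y). Q x y) ` (S \<times> S) \<noteq> {}" using kS by blast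
  have dle: "\<delta> \<le> Q x y" if "x \<in> S" "y \<in> S" for x y
    unfolding \<delta>_def using that by (intro Min_le[OF fin]) auto
  define cT where "cT = 1 - real (card S) * \<delta>"
  have dpos: "\<delta> > 0" using Min_in[OF fin ne] M unfolding \<delta>_def Q_def S_def by auto
  have "real (card S) * \<delta> = (\<Sum>y\<in>S. \<delta>)" by simp
  also have "\<dots> \<le> (\<Sum>y\<in>S. Q k y)" using dle kS by (intro sum_mono) auto
  also have "\<dots> = 1" using Qs kS by (simp add: stoch_def)
  finally have cT0: "0 \<le> cT" unfolding cT_def by simp
  have "card S > 0" using finS kS by (auto simp: card_gt_0_iff)
  hence "real (card S) \<ge> 1" by simp
  hence "real (card S) * \<delta> > 0" using dpos by simp
  hence cT1: "cT < 1" unfolding cT_def by simp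
  define g where "g i s = (\<Sum>k\<in>S. \<bar>\<Sum>j\<in>S. d i j * mp S T s j k\<bar>)" for i s
  define Gm where "Gm s = Max ((\<lambda>i. g i s) ` {1..N})" for s
  have finN: "finite ((\<lambda>i. g i s) ` {1..N})" for s by simp
  have neN: "(\<lambda>i. g i s) ` {1..N} \<noteq> {}" for s using N1 by simp
  have gle: "g i s \<le> Gm s" if "i \<in> {1..N}" for i s
    unfolding Gm_def using that by (intro Max_ge[OF finN]) auto
  have g0: "0 \<le> g i s" for i s unfolding g_def by (simp add: sum_nonneg)
  have H: "(\<Sum>j\<in>S. (\<Sum>l\<in>S. d i l * T l j) * mp S T s j k') = (\<Sum>l\<in>S. d i l * mp S T (Suc s) l k')"
    if k': "k' \<in> S" for i s k'
  proof -
    have "(\<Sum>j\<in>S. (\<Sum>l\<in>S. d i l * T l j) * mp S T s j k') = (\<Sum>l\<in>S. d i l * (\<Sum>j\<in>S. T l j * mp S T s j k'))"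
      by (simp add: sum_distrib_left sum_distrib_right mult.assoc) (rule sum.swap)
    also have "\<dots> = (\<Sum>l\<in>S. d i l * mp S T (Suc s) l k')"
    proof (intro sum.cong refl arg_cong2[where f="(*)"])
      fix l assume l: "l \<in> S"
      have aux: "mp S T 1 l = T l" by (intro ext mp_one l finS)
      have "mp S T (1 + s) l k' = (\<Sum>j\<in>S. mp S T 1 l j * mp S T s j k')" by (rule mp_add[OF finS k'])
      then show "(\<Sum>j\<in>S. T l j * mp S T s j k') = mp S T (Suc s) l k'" by (simp only: aux plus_1_eq_Suc)
    qed
    finally show ?thesis .
  qed
  have step: "g n' s \<le> Gm (Suc s)" if n': "n' \<in> {1..N}" for n' s
  proof -
    define c where "c = 1 / real (card (nbhd N nv n'))"
    have c0: "0 \<le> c" unfolding c_def by simp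
    have V: "nbhd N nv n' \<subseteq> {1..N}" by (rule nbhd_sub[OF N1])
    have eq: "(\<Sum>j\<in>S. d n' j * mp S T s j k') = c * (\<Sum>i\<in>nbhd N nv n'. \<Sum>l\<in>S. d i l * mp S T (Suc s) l k')"
      if k': "k' \<in> S" for k'
    proof -
      have "(\<Sum>j\<in>S. d n' j * mp S T s j k') = (\<Sum>j\<in>S. (c * (\<Sum>i\<in>nbhd N nv n'. \<Sum>l\<in>S. d i l * T l j)) * mp S T s j k')"
        using de[OF n'] unfolding c_def S_def by (intro sum.cong refl) auto
      also have "\<dots> = c * (\<Sum>i\<in>nbhd N nv n'. \<Sum>j\<in>S. (\<Sum>l\<in>S. d i l * T l j) * mp S T s j k')"
        by (subst sum.swap) (simp add: sum_distrib_left sum_distrib_right mult_ac)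
      also have "\<dots> = c * (\<Sum>i\<in>nbhd N nv n'. \<Sum>l\<in>S. d i l * mp S T (Suc s) l k')"
        using H[OF k'] by simp
      finally show ?thesis .
    qed
    have "g n' s = (\<Sum>k'\<in>S. \<bar>c * (\<Sum>i\<in>nbhd N nv n'. \<Sum>l\<in>S. d i l * mp S T (Suc s) l k')\<bar>)"
      unfolding g_def using eq by (intro sum.cong refl) auto
    also have "\<dots> \<le> (\<Sum>k'\<in>S. c * (\<Sum>i\<in>nbhd N nv n'. \<bar>\<Sum>l\<in>S. d i l * mp S T (Suc s) l k'\<bar>))"
      using c0 by (intro sum_mono) (auto simp: abs_mult intro!: mult_left_mono sum_abs)
    also have "\<dots> = c * (\<Sum>i\<in>nbhd N nv n'. g i (Suc s))"
      unfolding g_def by (subst sum.swap) (simp add: sum_distrib_left)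
    also have "\<dots> \<le> c * (\<Sum>i\<in>nbhd N nv n'. Gm (Suc s))"
      using c0 V gle by (intro mult_left_mono sum_mono) auto
    also have "\<dots> = Gm (Suc s)" unfolding c_def using nbhd_card[OF n', of nv] by simp
    finally show ?thesis .
  qed
  have mono: "Gm 0 \<le> Gm s" for s
  proof (induction s)
    case (Suc s)
    have "Gm s \<le> Gm (Suc s)" unfolding Gm_def[of s] using step
      by (intro Max.boundedI[OF finN neN]) auto
    then show ?case using Suc by simp
  qed simp
  have gM: "g i M \<le> cT * g i 0" if i: "i \<in> {1..N}" for i
  proof -
    have "g i M \<le> cT * (\<Sum>x\<in>S. \<bar>d i x\<bar>)" unfolding g_def cT_def
      using dobrushin[OF finS Qs dle, of "d i"] ds[OF i] unfolding Q_def S_def by simp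
    also have "(\<Sum>x\<in>S. \<bar>d i x\<bar>) = g i 0" unfolding g_def
    proof (intro sum.cong refl)
      fix x assume x: "x \<in> S"
      have "(\<Sum>j\<in>S. d i j * mp S T 0 j x) = (\<Sum>j\<in>S. if j = x then d i j else 0)"
        by (intro sum.cong refl) auto
      also have "\<dots> = d i x" using x finS by simp
      finally show "\<bar>d i x\<bar> = \<bar>\<Sum>j\<in>S. d i j * mp S T 0 j x\<bar>" by simp
    qed
    finally show ?thesis .
  qed
  have "Gm M \<le> cT * Gm 0" unfolding Gm_def[of M]
  proof (intro Max.boundedI[OF finN neN])
    fix a assume "a \<in> (\<lambda>i. g i M) ` {1..N}"
    then obtain i where i: "i \<in> {1..N}" "a = g i M" by blast
    have "g i M \<le> cT * g i 0" by (rule gM[OF i(1)])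
    also have "\<dots> \<le> cT * Gm 0" using cT0 gle[OF i(1)] by (intro mult_left_mono) auto
    finally show "a \<le> cT * Gm 0" using i by simp
  qed
  hence G0: "Gm 0 \<le> cT * Gm 0" using mono[of M] by simp
  have Gp: "0 \<le> Gm 0" using gle[OF n, of 0] g0[of n 0] by linarith
  have "(1 - cT) * Gm 0 \<le> 0" using G0 by (simp add: algebra_simps)
  hence "Gm 0 \<le> 0" using cT1 by (simp add: mult_le_0_iff)
  hence "Gm 0 = 0" using Gp by simp
  hence "g n 0 \<le> 0" using gle[OF n] by metis
  hence "g n 0 = 0" using g0[of n 0] by simp
  moreover have "g n 0 = (\<Sum>x\<in>S. \<bar>d n x\<bar>)" unfolding g_def
  proof (intro sum.cong refl)
    fix x assume x: "x \<in> S"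
    have "(\<Sum>j\<in>S. d n j * mp S T 0 j x) = (\<Sum>j\<in>S. if j = x then d n j else 0)"
      by (intro sum.cong refl) auto
    also have "\<dots> = d n x" using x finS by simp
    finally show "\<bar>\<Sum>j\<in>S. d n j * mp S T 0 j x\<bar> = \<bar>d n x\<bar>" by simp
  qed
  ultimately have "(\<Sum>x\<in>S. \<bar>d n x\<bar>) = 0" by simp
  hence "\<bar>d n k\<bar> = 0" using finS kS by (subst (asm) sum_nonneg_eq_0_iff) auto
  then show ?thesis by simp
qed

theorem theorem3p2:
  fixes N K nv :: nat
  assumes "N \<ge> 1" and "K \<ge> 1"
  shows "(\<forall>T1 T2.
            row_stochastic K T1 \<and> irreducible_mat K T1 \<and> aperiodic_mat K T1 \<and>
            row_stochastic K T2 \<and> irreducible_mat K T2 \<and> aperiodic_mat K T2 \<and>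
            (\<forall>x\<in>config_space N K. \<forall>y\<in>config_space N K.
                global_trans N nv T1 x y = global_trans N nv T2 x y)
            \<longrightarrow> (\<forall>i\<in>{1..K}. \<forall>j\<in>{1..K}. T1 i j = T2 i j))
       \<and> (\<forall>T. row_stochastic K T \<and> irreducible_mat K T \<and> aperiodic_mat K T \<longrightarrow>
            (\<exists>!\<pi>. invariant_measure (config_space N K) (global_trans N nv T) \<pi>) \<and>
            (\<exists>!\<pi>'. invariant_measure {1..K} T \<pi>') \<and>
            (\<forall>\<pi> \<pi>'. invariant_measure (config_space N K) (global_trans N nv T) \<pi> \<and>
                      invariant_measure {1..K} T \<pi>' \<longrightarrow>
                      (\<forall>n\<in>{1..N}. \<forall>k\<in>{1..K}. marginal N K \<pi> n k = \<pi>' k)))"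
proof (intro conjI allI impI)
  fix T1 T2 :: "nat \<Rightarrow> nat \<Rightarrow> real"
  assume H: "row_stochastic K T1 \<and> irreducible_mat K T1 \<and> aperiodic_mat K T1 \<and>
            row_stochastic K T2 \<and> irreducible_mat K T2 \<and> aperiodic_mat K T2 \<and>
            (\<forall>x\<in>config_space N K. \<forall>y\<in>config_space N K.
                global_trans N nv T1 x y = global_trans N nv T2 x y)"
  show "\<forall>i\<in>{1..K}. \<forall>j\<in>{1..K}. T1 i j = T2 i j"
  proof (intro ballI)
    fix i j assume i: "i \<in> {1..K}" and j: "j \<in> {1..K}"
    define x0 where "x0 = (\<lambda>n. if n \<in> {1..N} then i else undefined)"
    have x0: "x0 \<in> config_space N K" using i unfolding x0_def config_space_def by auto
    have rs1: "row_stochastic K T1" and rs2: "row_stochastic K T2" using H by blast+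
    have eqG: "\<forall>x\<in>config_space N K. \<forall>y\<in>config_space N K.
                global_trans N nv T1 x y = global_trans N nv T2 x y" using H by blast
    have "T1 i j = (\<Sum>y\<in>{y \<in> config_space N K. y 1 = j}. global_trans N nv T1 x0 y)"
      unfolding x0_def by (rule T_from_global[OF assms(1) rs1 i j])
    also have "\<dots> = (\<Sum>y\<in>{y \<in> config_space N K. y 1 = j}. global_trans N nv T2 x0 y)"
      using eqG x0 by (intro sum.cong refl) auto
    also have "\<dots> = T2 i j"
      unfolding x0_def by (rule T_from_global[OF assms(1) rs2 i j, symmetric])
    finally show "T1 i j = T2 i j" .
  qed
next
  fix T :: "nat \<Rightarrow> nat \<Rightarrow> real"
  assume H: "row_stochastic K T \<and> irreducible_mat K T \<and> aperiodic_mat K T"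
  have rs: "row_stochastic K T" and irr: "irreducible_mat K T" and ap: "aperiodic_mat K T"
    using H by blast+
  obtain MG where MG: "\<forall>x\<in>config_space N K. \<forall>y\<in>config_space N K.
            0 < mp (config_space N K) (global_trans N nv T) MG x y"
    using global_primitive[OF assms(1) rs irr ap] by blast
  obtain M where M: "\<forall>i\<in>{1..K}. \<forall>j\<in>{1..K}. 0 < mp {1..K} T M i j"
    using T_primitive[OF rs irr ap] by blast
  show "\<exists>!\<pi>. invariant_measure (config_space N K) (global_trans N nv T) \<pi>"
    by (rule stationary_unique[OF cs_fin cs_ne[OF assms(2)] global_stoch[OF assms(1) rs] MG])
  have Kne: "{1..K} \<noteq> {}" using assms(2) by simp
  show "\<exists>!\<pi>'. invariant_measure {1..K} T \<pi>'"
    by (rule stationary_unique[OF _ Kne rs_stoch[OF rs] M]) simp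
  show "\<forall>n\<in>{1..N}. \<forall>k\<in>{1..K}. marginal N K \<pi> n k = \<pi>' k"
    if P: "invariant_measure (config_space N K) (global_trans N nv T) \<pi> \<and> invariant_measure {1..K} T \<pi>'"
    for \<pi> \<pi>'
  proof (intro ballI)
    fix n k
    assume n: "n \<in> {1..N}" and k: "k \<in> {1..K}"
    have pi: "invariant_measure (config_space N K) (global_trans N nv T) \<pi>" using P by blast
    have pi': "invariant_measure {1..K} T \<pi>'" using P by blast
    define d where "d n k = marginal N K \<pi> n k - \<pi>' k" for n k
    have ds: "(\<Sum>k\<in>{1..K}. d n k) = 0" if "n \<in> {1..N}" for n
      unfolding d_def using marg_sum1[OF pi that] invD(3)[OF pi'] by (simp add: sum_subtractf)
    have de: "d n k = (1 / real (card (nbhd N nv n))) * (\<Sum>i\<in>nbhd N nv n. \<Sum>j\<in>{1..K}. d i j * T j k)"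
      if n: "n \<in> {1..N}" and k: "k \<in> {1..K}" for n k
    proof -
      define c where "c = 1 / real (card (nbhd N nv n))"
      have "(\<Sum>i\<in>nbhd N nv n. \<Sum>j\<in>{1..K}. d i j * T j k)
          = (\<Sum>i\<in>nbhd N nv n. \<Sum>j\<in>{1..K}. marginal N K \<pi> i j * T j k)
            - (\<Sum>i\<in>nbhd N nv n. \<Sum>j\<in>{1..K}. \<pi>' j * T j k)"
        unfolding d_def by (simp add: left_diff_distrib sum_subtractf)
      also have "(\<Sum>i\<in>nbhd N nv n. \<Sum>j\<in>{1..K}. \<pi>' j * T j k) = (\<Sum>i\<in>nbhd N nv n. \<pi>' k)"
        using invD(4)[OF pi' k] by simp
      also have "\<dots> = real (card (nbhd N nv n)) * \<pi>' k" by simp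
      finally have "c * (\<Sum>i\<in>nbhd N nv n. \<Sum>j\<in>{1..K}. d i j * T j k)
          = c * (\<Sum>i\<in>nbhd N nv n. \<Sum>j\<in>{1..K}. marginal N K \<pi> i j * T j k) - \<pi>' k"
        unfolding c_def using nbhd_card[OF n, of nv] by (simp add: right_diff_distrib)
      also have "\<dots> = d n k" unfolding d_def c_def using marg_eq[OF assms(1) rs pi n k] by simp
      finally show ?thesis unfolding c_def by simp
    qed
    have "d n k = 0" by (rule marg_contract[OF assms(1) rs M ds de n k])
    then show "marginal N K \<pi> n k = \<pi>' k" unfolding d_def by simp
  qed
qed


end
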